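(* For every $m\times n$ XOR non-local game $G$ there are non-negative constants $c_1,\dots,c_m$ such that for every $0\le\epsilon<1/(4(m+n))$ and every $\epsilon$-optimal vector strategy $\{u_i\},\{v_j\}$ for $G$, $$\Bigl\|\sum_jG_{ij}v_j-c_iu_i\Bigr\|\le\sqrt{10}\,(m+n)^{1/4}\epsilon^{1/4}\qquad(1\le i\le m).$$ In particular, for every optimal vector strategy $\sum_jG_{ij}v_j=c_iu_i$ and $\sum_jG_{ij}u_i\cdot v_j=c_i$. If $G$ has no zero rows then all $c_i$ are strictly positive.
   Context: An $m\times n$ XOR non-local game has real cost matrix $G=(G_{ij})$ with $\sum|G_{ij}|=1$. A vector strategy for $G$ is a pair of families of unit vectors $u_1,\dots,u_m$, $v_1,\dots,v_n$ in some $\mathbb{R}^N$, with bias $\sum_{i,j}G_{ij}u_i\cdot v_j$. The quantum success bias $\varepsilon_q(G)$ equals the maximum bias over all vector strategies; a vector strategy is $\epsilon$-optimal if its bias is at least $\varepsilon_q(G)-\epsilon$, and optimal if $\epsilon=0$. *)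

theory Defs
  imports Complex_Main
begin

text \<open>Vectors in R^N are represented as functions nat => real, only coordinates k < N matter.
  The dimension N is arbitrary (it varies over all naturals), so it is an explicit parameter.\<close>

definition ip :: "nat \<Rightarrow> (nat \<Rightarrow> real) \<Rightarrow> (nat \<Rightarrow> real) \<Rightarrow> real" where
  "ip N x y = (\<Sum>k<N. x k * y k)"

definition vnorm :: "nat \<Rightarrow> (nat \<Rightarrow> real) \<Rightarrow> real" where
  "vnorm N x = sqrt (ip N x x)"

definition xor_game :: "nat \<Rightarrow> nat \<Rightarrow> (nat \<Rightarrow> nat \<Rightarrow> real) \<Rightarrow> bool" where
  "xor_game m n G \<longleftrightarrow> (\<Sum>i<m. \<Sum>j<n. \<bar>G i j\<bar>) = 1"

definition vec_strategy :: "nat \<Rightarrow> nat \<Rightarrow> nat \<Rightarrow> (nat \<Rightarrow> nat \<Rightarrow> real) \<Rightarrow> (nat \<Rightarrow> nat \<Rightarrow> real) \<Rightarrow> bool" where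
  "vec_strategy m n N u v \<longleftrightarrow> (\<forall>i<m. vnorm N (u i) = 1) \<and> (\<forall>j<n. vnorm N (v j) = 1)"

definition bias :: "nat \<Rightarrow> nat \<Rightarrow> nat \<Rightarrow> (nat \<Rightarrow> nat \<Rightarrow> real) \<Rightarrow> (nat \<Rightarrow> nat \<Rightarrow> real) \<Rightarrow> (nat \<Rightarrow> nat \<Rightarrow> real) \<Rightarrow> real" where
  "bias m n N G u v = (\<Sum>i<m. \<Sum>j<n. G i j * ip N (u i) (v j))"

definition eps_q :: "nat \<Rightarrow> nat \<Rightarrow> (nat \<Rightarrow> nat \<Rightarrow> real) \<Rightarrow> real" where
  "eps_q m n G = Sup {bias m n N G u v | N u v. vec_strategy m n N u v}"

definition eps_optimal :: "nat \<Rightarrow> nat \<Rightarrow> (nat \<Rightarrow> nat \<Rightarrow> real) \<Rightarrow> real \<Rightarrow> nat \<Rightarrow> (nat \<Rightarrow> nat \<Rightarrow> real) \<Rightarrow> (nat \<Rightarrow> nat \<Rightarrow> real) \<Rightarrow> bool" where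
  "eps_optimal m n G \<epsilon> N u v \<longleftrightarrow> vec_strategy m n N u v \<and> bias m n N G u v \<ge> eps_q m n G - \<epsilon>"

end

theory Submission imports Defs "HOL-Analysis.Convex" begin

definition xw :: "nat \<Rightarrow> (nat \<Rightarrow> nat \<Rightarrow> real) \<Rightarrow> nat \<Rightarrow> (nat \<Rightarrow> nat \<Rightarrow> real) \<Rightarrow> nat \<Rightarrow> real" where
  "xw n G i v = (\<lambda>k. \<Sum>j<n. G i j * v j k)"

definition cat :: "nat \<Rightarrow> real \<Rightarrow> (nat \<Rightarrow> real) \<Rightarrow> real \<Rightarrow> (nat \<Rightarrow> real) \<Rightarrow> nat \<Rightarrow> real" where
  "cat N1 a x b y = (\<lambda>t. if t < N1 then a * x t else b * y (t - N1))"

lemma sum_split_add: "(\<Sum>t<N1+N2. f t) = (\<Sum>t<N1. f t) + (\<Sum>t<N2. f (N1 + t :: nat)) " for f :: "nat \<Rightarrow> real"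
  by (induct N2) auto

lemma ip_cat: "ip (N1+N2) (cat N1 a x b y) (cat N1 a' x' b' y') = a*a' * ip N1 x x' + b*b' * ip N2 y y'"
  unfolding ip_def cat_def sum_split_add
  by (simp add: sum_distrib_left mult_ac)

lemma ip_nonneg: "0 \<le> ip N x x"
  unfolding ip_def by (auto intro: sum_nonneg)

lemma vnorm_sq: "(vnorm N x)^2 = ip N x x"
  unfolding vnorm_def using ip_nonneg[of N x] by simp

lemma vnorm_nonneg: "0 \<le> vnorm N x"
  unfolding vnorm_def using ip_nonneg[of N x] by simp

lemma unit_ip: "vnorm N x = 1 \<Longrightarrow> ip N x x = 1"
  using vnorm_sq by (metis one_power2)

lemma ip_sym: "ip N x y = ip N y x"
  unfolding ip_def by (simp add: mult.commute)

lemma CS: "\<bar>ip N x y\<bar> \<le> vnorm N x * vnorm N y"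
proof -
  have "(ip N x y)^2 \<le> ip N x x * ip N y y"
    using Cauchy_Schwarz_ineq_sum[of x y "{..<N}"] unfolding ip_def by (simp add: power2_eq_square)
  hence "sqrt ((ip N x y)^2) \<le> sqrt (ip N x x * ip N y y)" by (rule real_sqrt_le_mono)
  thus ?thesis unfolding vnorm_def by (simp add: real_sqrt_mult)
qed

lemma row_ip: "(\<Sum>j<n. G i j * ip N (u i) (v j)) = ip N (u i) (xw n G i v)"
  unfolding ip_def xw_def by (simp add: sum_distrib_left sum_distrib_right mult_ac sum.swap[of _ "{..<N}"])

lemma bias_rows: "bias m n N G u v = (\<Sum>i<m. ip N (u i) (xw n G i v))"
  unfolding bias_def using row_ip by simp

lemma ip_expand: "ip N (\<lambda>k. x k - c * y k) (\<lambda>k. x k - c * y k) = ip N x x - 2 * c * ip N y x + c^2 * ip N y y"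
  unfolding ip_def by (simp add: algebra_simps power2_eq_square sum.distrib sum_subtractf sum_distrib_left)

lemma xw_cat: "xw n G i (\<lambda>j. cat N1 a (v j) b (v' j)) = cat N1 a (xw n G i v) b (xw n G i v')"
  unfolding xw_def cat_def by (auto simp: sum_distrib_left mult_ac)

lemma ip_div: "ip N (\<lambda>k. x k / a) (\<lambda>k. x k / a) = ip N x x / a^2"
  unfolding ip_def by (simp add: sum_divide_distrib power2_eq_square)

lemma ip_div1: "ip N (\<lambda>k. x k / a) x = ip N x x / a"
  unfolding ip_def by (simp add: sum_divide_distrib)

lemma sum_ind: fixes i m :: nat shows "i < m \<Longrightarrow> (\<Sum>k<m. (if k = i then 1 else 0) * f k) = (f i :: real)"
proof -
  assume "i < m"
  have "(\<Sum>k<m. (if k = i then 1 else 0) * f k) = (\<Sum>k<m. if k = i then f k else 0)"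
    by (intro sum.cong) auto
  also have "\<dots> = f i" using \<open>i < m\<close> by (subst sum.delta) auto
  finally show ?thesis .
qed

context
  fixes m n :: nat and G :: "nat \<Rightarrow> nat \<Rightarrow> real"
  assumes xg: "xor_game m n G"
begin

lemma strat_ex: "vec_strategy m n 1 (\<lambda>i t. 1) (\<lambda>j t. 1)"
  unfolding vec_strategy_def vnorm_def ip_def by simp

lemma bias_le1:
  assumes "vec_strategy m n N u v" shows "bias m n N G u v \<le> 1"
proof -
  have "bias m n N G u v \<le> (\<Sum>i<m. \<Sum>j<n. \<bar>G i j\<bar>)"
    unfolding bias_def
  proof (intro sum_mono)
    fix i j assume i: "i \<in> {..<m}" and j: "j \<in> {..<n}"
    have "\<bar>ip N (u i) (v j)\<bar> \<le> vnorm N (u i) * vnorm N (v j)" by (rule CS)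
    also have "\<dots> = 1" using assms i j unfolding vec_strategy_def by auto
    finally have "\<bar>ip N (u i) (v j)\<bar> \<le> 1" .
    hence "\<bar>G i j\<bar> * \<bar>ip N (u i) (v j)\<bar> \<le> \<bar>G i j\<bar>"
      by (simp add: mult_left_le)
    thus "G i j * ip N (u i) (v j) \<le> \<bar>G i j\<bar>"
      by (metis abs_ge_self abs_mult order_trans)
  qed
  thus ?thesis using xg unfolding xor_game_def by simp
qed

abbreviation "BS \<equiv> {bias m n N G u v | N u v. vec_strategy m n N u v}"

lemma BS_ne: "BS \<noteq> {}" using strat_ex by blast
lemma BS_bdd: "bdd_above BS" using bias_le1 by (auto intro!: bdd_aboveI[where M=1])

lemma bias_le_q: "vec_strategy m n N u v \<Longrightarrow> bias m n N G u v \<le> eps_q m n G"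
  unfolding eps_q_def by (rule cSup_upper[OF _ BS_bdd]) blast

lemma q_le1: "eps_q m n G \<le> 1"
  unfolding eps_q_def by (rule cSup_least[OF BS_ne]) (auto intro: bias_le1)

lemma near: assumes "e > 0" shows "\<exists>N u v. vec_strategy m n N u v \<and> eps_q m n G - e < bias m n N G u v"
proof -
  have "eps_q m n G - e < Sup BS" using assms unfolding eps_q_def by simp
  then obtain x where "x \<in> BS" "eps_q m n G - e < x" using less_cSup_iff[OF BS_ne BS_bdd] by blast
  thus ?thesis by blast
qed

lemma ipw_le: "vec_strategy m n N u v \<Longrightarrow> i < m \<Longrightarrow> ip N (u i) (xw n G i v) \<le> vnorm N (xw n G i v)"
  using CS[of N "u i" "xw n G i v"] unfolding vec_strategy_def by auto

lemma sumA_le_q: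
  assumes S: "vec_strategy m n N u v"
  shows "(\<Sum>i<m. vnorm N (xw n G i v)) \<le> eps_q m n G"
proof -
  define u' where "u' i = (if 0 < vnorm N (xw n G i v) then (\<lambda>k. xw n G i v k / vnorm N (xw n G i v)) else u i)" for i
  have ipu: "ip N (u' i) (xw n G i v) = vnorm N (xw n G i v)" if "i < m" for i
  proof (cases "0 < vnorm N (xw n G i v)")
    case True
    thus ?thesis unfolding u'_def using ip_div1[of N "xw n G i v"] vnorm_sq[of N "xw n G i v"]
      by (auto simp: power2_eq_square field_simps)
  next
    case False
    hence z: "vnorm N (xw n G i v) = 0" using vnorm_nonneg[of N "xw n G i v"] by linarith
    have "\<bar>ip N (u i) (xw n G i v)\<bar> \<le> 0" using CS[of N "u i" "xw n G i v"] z by simp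
    thus ?thesis unfolding u'_def using False z by simp
  qed
  have S': "vec_strategy m n N u' v"
    unfolding vec_strategy_def
  proof (intro conjI allI impI)
    fix i assume i: "i < m"
    show "vnorm N (u' i) = 1"
    proof (cases "0 < vnorm N (xw n G i v)")
      case True
      hence "ip N (u' i) (u' i) = 1" unfolding u'_def using ip_div[of N "xw n G i v"] vnorm_sq[of N "xw n G i v", symmetric]
        by simp
      thus ?thesis unfolding vnorm_def by simp
    next
      case False thus ?thesis unfolding u'_def using S i unfolding vec_strategy_def by simp
    qed
  next
    fix j assume "j < n" thus "vnorm N (v j) = 1" using S unfolding vec_strategy_def by simp
  qed
  have "(\<Sum>i<m. vnorm N (xw n G i v)) = bias m n N G u' v"
    unfolding bias_rows using ipu by simp
  also have "\<dots> \<le> eps_q m n G" by (rule bias_le_q[OF S'])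
  finally show ?thesis .
qed

lemma A_le_q: assumes "vec_strategy m n N u v" "i < m" shows "vnorm N (xw n G i v) \<le> eps_q m n G"
proof -
  have "vnorm N (xw n G i v) \<le> (\<Sum>i<m. vnorm N (xw n G i v))"
    using assms(2) by (intro member_le_sum) (auto simp: vnorm_nonneg)
  thus ?thesis using sumA_le_q[OF assms(1)] by linarith
qed

lemma gap_row: assumes S: "vec_strategy m n N u v" and i: "i < m"
  shows "vnorm N (xw n G i v) - ip N (u i) (xw n G i v) \<le> eps_q m n G - bias m n N G u v"
proof -
  have "vnorm N (xw n G i v) - ip N (u i) (xw n G i v) \<le> (\<Sum>k<m. vnorm N (xw n G k v) - ip N (u k) (xw n G k v))"
    using i ipw_le[OF S] by (intro member_le_sum) auto
  also have "\<dots> = (\<Sum>k<m. vnorm N (xw n G k v)) - bias m n N G u v"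
    unfolding bias_rows by (simp add: sum_subtractf)
  finally show ?thesis using sumA_le_q[OF S] by linarith
qed

lemma sumA_ge_bias: "vec_strategy m n N u v \<Longrightarrow> bias m n N G u v \<le> (\<Sum>i<m. vnorm N (xw n G i v))"
  unfolding bias_rows by (intro sum_mono) (auto intro: ipw_le)


lemma mid:
  assumes S1: "vec_strategy m n N1 u1 v1" and S2: "vec_strategy m n N2 u2 v2" and i: "i < m"
  shows "(vnorm N1 (xw n G i v1) - vnorm N2 (xw n G i v2))^2
     \<le> 4 * ((eps_q m n G - bias m n N1 G u1 v1) + (eps_q m n G - bias m n N2 G u2 v2))"
proof -
  define h :: real where "h = 1 / sqrt 2"
  have hh: "h * h = 1/2" unfolding h_def by (simp add: real_sqrt_mult[symmetric])
  define u where "u k = cat N1 h (u1 k) h (u2 k)" for k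
  define v where "v j = cat N1 h (v1 j) h (v2 j)" for j
  let ?q = "eps_q m n G"
  define a where "a k = vnorm N1 (xw n G k v1)" for k
  define c where "c k = vnorm N2 (xw n G k v2)" for k
  define s where "s k = sqrt ((a k ^2 + c k ^2) / 2)" for k
  have S: "vec_strategy m n (N1+N2) u v"
    using S1 S2 unfolding vec_strategy_def u_def v_def vnorm_def ip_cat hh by simp
  have sk: "vnorm (N1+N2) (xw n G k v) = s k" for k
    unfolding v_def xw_cat s_def a_def c_def vnorm_sq by (simp add: vnorm_def ip_cat hh field_simps)
  have a0: "0 \<le> a k" "0 \<le> c k" for k unfolding a_def c_def by (auto simp: vnorm_nonneg)
  have a1: "a k \<le> 1" "c k \<le> 1" if "k < m" for k
    unfolding a_def c_def using A_le_q[OF S1 that] A_le_q[OF S2 that] q_le1 by auto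
  have sge: "(a k + c k)/2 \<le> s k" for k
    unfolding s_def
  proof (rule real_le_rsqrt)
    show "((a k + c k) / 2)\<^sup>2 \<le> ((a k)\<^sup>2 + (c k)\<^sup>2) / 2"
      using sum_squares_ge_zero[of "a k - c k" 0] by (simp add: power2_eq_square field_simps)
  qed
  have "(\<Sum>k<m. s k) \<le> ?q" using sumA_le_q[OF S] sk by simp
  moreover have "bias m n N1 G u1 v1 \<le> (\<Sum>k<m. a k)" using sumA_ge_bias[OF S1] unfolding a_def .
  moreover have "bias m n N2 G u2 v2 \<le> (\<Sum>k<m. c k)" using sumA_ge_bias[OF S2] unfolding c_def .
  moreover have "(\<Sum>k<m. (a k + c k)/2) = ((\<Sum>k<m. a k) + (\<Sum>k<m. c k))/2"
    by (simp add: sum_divide_distrib[symmetric] sum.distrib)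
  ultimately have tot: "(\<Sum>k<m. s k - (a k + c k)/2) \<le> ((?q - bias m n N1 G u1 v1) + (?q - bias m n N2 G u2 v2))/2"
    by (simp add: sum_subtractf)
  have "s i - (a i + c i)/2 \<le> (\<Sum>k<m. s k - (a k + c k)/2)"
    using i sge by (intro member_le_sum) auto
  with tot have d: "s i - (a i + c i)/2 \<le> ((?q - bias m n N1 G u1 v1) + (?q - bias m n N2 G u2 v2))/2" by linarith
  have "(a i)^2 \<le> 1" "(c i)^2 \<le> 1" using a0[of i] a1[OF i] by (auto intro: power_le_one)
  hence s1: "s i \<le> 1" unfolding s_def by simp
  have ssq: "(s i)^2 = ((a i)^2 + (c i)^2)/2" unfolding s_def by simp
  have "(a i - c i)^2 = 4 * (((a i)^2 + (c i)^2)/2 - ((a i + c i)/2)^2)"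
    by (simp add: power2_eq_square field_simps)
  also have "\<dots> = 4 * ((s i)^2 - ((a i + c i)/2)^2)" using ssq by simp
  also have "\<dots> = 4 * ((s i - (a i + c i)/2) * (s i + (a i + c i)/2))"
    by (simp add: power2_eq_square algebra_simps)
  also have "\<dots> \<le> 4 * (((?q - bias m n N1 G u1 v1) + (?q - bias m n N2 G u2 v2))/2 * 2)"
  proof -
    have aa: "0 \<le> a i" "0 \<le> c i" by (rule a0)+
    have s0: "0 \<le> s i" using sge[of i] aa 
      by simp
    have y0: "0 \<le> s i + (a i + c i)/2" using s0 aa by simp
    have "(s i - (a i + c i)/2) * (s i + (a i + c i)/2) \<le> (((?q - bias m n N1 G u1 v1) + (?q - bias m n N2 G u2 v2))/2) * 2"
      by (rule mult_mono) (use d s1 a1[OF i] sge[of i] aa y0 in linarith)+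
    thus ?thesis by linarith
  qed
  finally show ?thesis unfolding a_def c_def by simp
qed


lemma gap_nonneg: assumes "vec_strategy m n N u v" shows "0 \<le> eps_q m n G - bias m n N G u v"
  using bias_le_q[OF assms] by simp

definition cc :: "nat \<Rightarrow> real" where
  "cc i = Inf {vnorm N (xw n G i v) + 2 * sqrt (eps_q m n G - bias m n N G u v) | N u v. vec_strategy m n N u v}"

lemma cc_upper: assumes "vec_strategy m n N u v"
  shows "cc i \<le> vnorm N (xw n G i v) + 2 * sqrt (eps_q m n G - bias m n N G u v)"
  unfolding cc_def
proof (rule cInf_lower)
  show "vnorm N (xw n G i v) + 2 * sqrt (eps_q m n G - bias m n N G u v)
    \<in> {vnorm N (xw n G i v) + 2 * sqrt (eps_q m n G - bias m n N G u v) | N u v. vec_strategy m n N u v}"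
    using assms by blast
  show "bdd_below {vnorm N (xw n G i v) + 2 * sqrt (eps_q m n G - bias m n N G u v) | N u v. vec_strategy m n N u v}"
    by (rule bdd_belowI[where m=0]) (auto intro!: add_nonneg_nonneg simp: vnorm_nonneg bias_le_q)
qed

lemma cc_nonneg: "0 \<le> cc i"
  unfolding cc_def
  by (rule cInf_greatest) (use strat_ex in \<open>auto intro!: add_nonneg_nonneg simp: vnorm_nonneg bias_le_q\<close>)

lemma cc_lower: assumes S: "vec_strategy m n N u v" and i: "i < m"
  shows "vnorm N (xw n G i v) - 2 * sqrt (eps_q m n G - bias m n N G u v) \<le> cc i"
  unfolding cc_def
proof (rule cInf_greatest)
  show "{vnorm N (xw n G i v) + 2 * sqrt (eps_q m n G - bias m n N G u v) | N u v. vec_strategy m n N u v} \<noteq> {}"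
    using strat_ex by blast
  fix x assume "x \<in> {vnorm N (xw n G i v) + 2 * sqrt (eps_q m n G - bias m n N G u v) | N u v. vec_strategy m n N u v}"
  then obtain N2 u2 v2 where T: "vec_strategy m n N2 u2 v2" and x: "x = vnorm N2 (xw n G i v2) + 2 * sqrt (eps_q m n G - bias m n N2 G u2 v2)"
    by blast
  define g1 where "g1 = eps_q m n G - bias m n N G u v"
  define g2 where "g2 = eps_q m n G - bias m n N2 G u2 v2"
  have g: "0 \<le> g1" "0 \<le> g2" unfolding g1_def g2_def using gap_nonneg S T by auto
  have "(vnorm N (xw n G i v) - vnorm N2 (xw n G i v2))^2 \<le> 4 * (g1 + g2)"
    using mid[OF S T i] unfolding g1_def g2_def .
  hence "sqrt ((vnorm N (xw n G i v) - vnorm N2 (xw n G i v2))^2) \<le> sqrt (4 * (g1 + g2))"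
    by (rule real_sqrt_le_mono)
  moreover have "sqrt (4 * (g1 + g2)) = 2 * sqrt (g1 + g2)" 
    unfolding real_sqrt_mult by simp
  ultimately have "\<bar>vnorm N (xw n G i v) - vnorm N2 (xw n G i v2)\<bar> \<le> 2 * sqrt (g1 + g2)"
    by (metis real_sqrt_abs)
  moreover have "sqrt (g1 + g2) \<le> sqrt g1 + sqrt g2" using g by (rule sqrt_add_le_add_sqrt)
  ultimately show "vnorm N (xw n G i v) - 2 * sqrt (eps_q m n G - bias m n N G u v) \<le> x"
    unfolding x g1_def[symmetric] g2_def[symmetric] by linarith
qed

lemma cc_le1: assumes i: "i < m" shows "cc i \<le> 1"
proof (rule field_le_epsilon)
  fix d :: real assume d: "0 < d"
  obtain N u v where S: "vec_strategy m n N u v" and b: "eps_q m n G - (d/2)^2 < bias m n N G u v"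
    using near[of "(d/2)^2"] d by auto
  have "sqrt (eps_q m n G - bias m n N G u v) \<le> sqrt ((d/2)^2)"
    using b by (intro real_sqrt_le_mono) linarith
  hence "sqrt (eps_q m n G - bias m n N G u v) \<le> d/2" using d by simp
  moreover have "vnorm N (xw n G i v) \<le> 1" using A_le_q[OF S i] q_le1 by linarith
  ultimately show "cc i \<le> 1 + d" using cc_upper[OF S, of i] by linarith
qed

lemma robust:
  assumes S: "vec_strategy m n N u v" and i: "i < m" and e: "0 \<le> e" and b: "eps_q m n G - e \<le> bias m n N G u v"
  shows "ip N (\<lambda>k. xw n G i v k - cc i * u i k) (\<lambda>k. xw n G i v k - cc i * u i k) \<le> 6 * e"
    and "vnorm N (xw n G i v) - ip N (u i) (xw n G i v) \<le> e"
    and "\<bar>vnorm N (xw n G i v) - cc i\<bar> \<le> 2 * sqrt e"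
proof -
  let ?a = "vnorm N (xw n G i v)" and ?p = "ip N (u i) (xw n G i v)" and ?c = "cc i"
  have sg: "sqrt (eps_q m n G - bias m n N G u v) \<le> sqrt e" using b by (intro real_sqrt_le_mono) linarith
  show ac: "\<bar>?a - ?c\<bar> \<le> 2 * sqrt e" using cc_upper[OF S, of i] cc_lower[OF S i] sg by linarith
  show ap: "?a - ?p \<le> e" using gap_row[OF S i] b by linarith
  have "(?a - ?c)^2 \<le> (2 * sqrt e)^2"
    using ac by (metis abs_ge_zero order_trans power2_abs power_mono)
  hence ac2: "(?a - ?c)^2 \<le> 4 * e" using e by (simp add: power_mult_distrib)
  have uu: "ip N (u i) (u i) = 1" using S i unfolding vec_strategy_def by (auto intro: unit_ip)
  have "ip N (\<lambda>k. xw n G i v k - ?c * u i k) (\<lambda>k. xw n G i v k - ?c * u i k) = ?a^2 - 2 * ?c * ?p + ?c^2"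
    using ip_expand[of N "xw n G i v" ?c "u i"] uu vnorm_sq[of N "xw n G i v"] by simp
  also have "\<dots> \<le> ?a^2 - 2 * ?c * (?a - e) + ?c^2"
    using ap cc_nonneg[of i] by (simp add: mult_left_mono)
  also have "\<dots> = (?a - ?c)^2 + 2 * ?c * e" by (simp add: power2_eq_square algebra_simps)
  also have "\<dots> \<le> 4 * e + 2 * 1 * e"
    using ac2 cc_le1[OF i] e by (intro add_mono mult_right_mono) auto
  finally show "ip N (\<lambda>k. xw n G i v k - ?c * u i k) (\<lambda>k. xw n G i v k - ?c * u i k) \<le> 6 * e" by simp
qed


lemma cc_pos: assumes i: "i < m" and nz: "\<exists>j<n. G i j \<noteq> 0" shows "0 < cc i"
proof (rule ccontr)
  assume "\<not> 0 < cc i"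
  hence c0: "cc i = 0" using cc_nonneg[of i] by linarith
  define r where "r = (\<Sum>j<n. \<bar>G i j\<bar>)"
  from nz obtain j0 where j0: "j0 < n" "G i j0 \<noteq> 0" by blast
  have r0: "0 < r" unfolding r_def using j0 by (intro sum_pos2[of _ j0]) auto
  have "r \<le> (\<Sum>k<m. \<Sum>j<n. \<bar>G k j\<bar>)" unfolding r_def using i
    by (intro member_le_sum[where f="\<lambda>k. \<Sum>j<n. \<bar>G k j\<bar>"]) (auto intro: sum_nonneg)
  hence r1: "r \<le> 1" using xg unfolding xor_game_def by simp
  define \<delta> where "\<delta> = r^4 / 1024"
  have d0: "0 < \<delta>" unfolding \<delta>_def using r0 by simp
  have sd: "sqrt \<delta> = r^2 / 32"
  proof -
    have "\<delta> = (r^2/32)^2" unfolding \<delta>_def by (simp add: power2_eq_square field_simps power4_eq_xxxx)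
    thus ?thesis using r0 by simp
  qed
  have "r^4 \<le> r^2" using r0 r1 by (simp add: power_decreasing)
  hence dle: "\<delta> \<le> r^2 / 1024" unfolding \<delta>_def by simp
  obtain N u v where S: "vec_strategy m n N u v" and b: "eps_q m n G - \<delta> < bias m n N G u v"
    using near[OF d0] by blast
  let ?q = "eps_q m n G"
  define A where "A k = vnorm N (xw n G k v)" for k
  define R where "R k = ip N (u k) (xw n G k v)" for k
  have "sqrt (?q - bias m n N G u v) \<le> sqrt \<delta>" using b by (intro real_sqrt_le_mono) linarith
  hence Ai: "A i \<le> r^2/16" using cc_lower[OF S i] c0 sd unfolding A_def by linarith
  have RA: "R k \<le> A k" if "k < m" for k unfolding R_def A_def using ipw_le[OF S that] .
  define al where "al k = (if k = i then 0 else 1::real)" for k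
  define be where "be k = (if k = i then 1 else 0::real)" for k
  define t where "t = r / 2"
  define s where "s = sqrt (1 - t^2)"
  have t0: "0 < t" "t \<le> 1/2" unfolding t_def using r0 r1 by auto
  have tt: "t^2 \<le> 1" using t0 by (simp add: power_le_one)
  have ss: "s^2 = 1 - t^2" unfolding s_def using tt by simp
  define sg where "sg j = (if 0 \<le> G i j then 1 else -1::real)" for j
  define u' where "u' k = cat N (al k) (u k) (be k) (\<lambda>_. 1)" for k
  define v' where "v' j = cat N s (v j) t (\<lambda>_. sg j)" for j
  have ip1: "ip 1 f g = f 0 * g 0" for f g unfolding ip_def by simp
  have S': "vec_strategy m n (N+1) u' v'"
    unfolding vec_strategy_def
  proof (intro conjI allI impI)
    fix k assume k: "k < m"
    have "ip (N+1) (u' k) (u' k) = al k * al k * ip N (u k) (u k) + be k * be k * 1"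
      unfolding u'_def ip_cat ip1 by simp
    also have "\<dots> = 1" using S k unfolding vec_strategy_def al_def be_def by (auto intro: unit_ip)
    finally show "vnorm (N+1) (u' k) = 1" unfolding vnorm_def by simp
  next
    fix j assume j: "j < n"
    have "ip (N+1) (v' j) (v' j) = s * s * ip N (v j) (v j) + t * t * (sg j * sg j)"
      unfolding v'_def ip_cat ip1 by simp
    also have "\<dots> = 1" using unit_ip[of N "v j"] S j ss unfolding vec_strategy_def sg_def
      by (auto simp: power2_eq_square)
    finally show "vnorm (N+1) (v' j) = 1" unfolding vnorm_def by simp
  qed
  define Y where "Y k = (\<Sum>j<n. G k j * sg j)" for k
  have Yi: "Y i = r" unfolding Y_def r_def sg_def by (intro sum.cong) auto
  have Rk: "R k = (\<Sum>j<n. G k j * ip N (u k) (v j))" for k unfolding R_def by (simp add: row_ip)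
  have "bias m n (N+1) G u' v' = (\<Sum>k<m. \<Sum>j<n. G k j * (al k * s * ip N (u k) (v j) + be k * t * sg j))"
    unfolding bias_def u'_def v'_def ip_cat ip1 by simp
  also have "\<dots> = (\<Sum>k<m. al k * s * R k + be k * t * Y k)"
    unfolding Rk Y_def by (simp add: sum.distrib sum_distrib_left algebra_simps)
  also have "\<dots> = s * (\<Sum>k<m. al k * R k) + t * (\<Sum>k<m. be k * Y k)"
    by (simp add: sum.distrib sum_distrib_left algebra_simps)
  also have "(\<Sum>k<m. be k * Y k) = r" unfolding be_def using sum_ind[OF i] Yi by simp
  finally have bias': "bias m n (N+1) G u' v' = s * (\<Sum>k<m. al k * R k) + t * r" .
  define B where "B = (\<Sum>k<m. al k * R k)"
  have "(\<Sum>k<m. R k) = (\<Sum>k<m. al k * R k + be k * R k)"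
    unfolding al_def be_def by (intro sum.cong) auto
  also have "\<dots> = B + R i" unfolding B_def be_def using sum_ind[OF i] by (simp add: sum.distrib)
  finally have BR: "(\<Sum>k<m. R k) = B + R i" .
  have bR: "bias m n N G u v = (\<Sum>k<m. R k)" unfolding bias_rows R_def ..
  have "B \<le> (\<Sum>k<m. A k)" unfolding B_def
  proof (rule sum_mono)
    fix k assume k: "k \<in> {..<m}"
    have "0 \<le> A k" unfolding A_def by (rule vnorm_nonneg)
    thus "al k * R k \<le> A k" using RA[of k] k unfolding al_def by auto
  qed
  hence B1: "B \<le> 1" using sumA_le_q[OF S] q_le1 unfolding A_def by linarith
  have Blow: "?q - \<delta> - r^2/16 < B" using b BR bR RA[OF i] Ai by linarith
  have sB: "B - t^2 \<le> s * B"
  proof (cases "0 \<le> B")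
    case True
    have x0: "0 \<le> 1 - t^2" "1 - t^2 \<le> 1" using tt by auto
    have "(1 - t^2)^2 \<le> 1 - t^2" using mult_left_le[OF x0(2) x0(1)] by (simp add: power2_eq_square)
    hence "1 - t^2 \<le> s" unfolding s_def by (intro real_le_rsqrt)
    hence "(1 - t^2) * B \<le> s * B" using True by (rule mult_right_mono)
    moreover have "t^2 * B \<le> t^2" using B1 True by (simp add: mult_left_le)
    ultimately show ?thesis by (simp add: algebra_simps)
  next
    case False
    have "s \<le> 1" unfolding s_def using t0 by simp
    hence "1 * B \<le> s * B" using False by (intro mult_right_mono_neg) auto
    thus ?thesis using False by (smt (verit) zero_le_power2)
  qed
  have "t^2 = r^2/4" "t * r = r^2/2" unfolding t_def by (simp_all add: power2_eq_square)
  moreover have "0 < r^2" using r0 by simp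
  ultimately have "?q < bias m n (N+1) G u' v'" using bias' sB Blow dle unfolding B_def[symmetric]
    by linarith
  thus False using bias_le_q[OF S'] by linarith
qed

end


lemma final_num:
  fixes e M :: real assumes e: "0 \<le> e" "e \<le> 1" and M: "1 \<le> M"
  shows "sqrt (6 * e) \<le> sqrt 10 * M powr (1/4) * e powr (1/4)"
proof -
  define E where "E = e powr (1/4)"
  have EE: "E * E = sqrt e" unfolding E_def
    using powr_add[of e "1/4" "1/4", symmetric] powr_half_sqrt[OF e(1)] by simp
  have E1: "E \<le> 1" unfolding E_def using powr_mono2[of "1/4" e 1] e by simp
  have E0: "0 \<le> E" unfolding E_def by simp
  have M1: "1 \<le> M powr (1/4)" using powr_mono2[of "1/4" 1 M] M by simp
  have "sqrt (6 * e) = sqrt 6 * (E * E)" using EE by (simp add: real_sqrt_mult)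
  also have "\<dots> \<le> sqrt 6 * E" using E0 E1 by (simp add: mult_left_le)
  also have "\<dots> \<le> sqrt 10 * E" using E0 by (intro mult_right_mono) auto
  also have "\<dots> \<le> sqrt 10 * (M powr (1/4) * E)" using E0 M1
    by (intro mult_left_mono) (auto simp: mult_le_cancel_right1)
  finally show ?thesis unfolding E_def by (simp add: mult_ac)
qed

theorem theorem3p1:
  fixes m n :: nat and G :: "nat \<Rightarrow> nat \<Rightarrow> real"
  assumes "xor_game m n G"
  shows "\<exists>c :: nat \<Rightarrow> real. (\<forall>i<m. c i \<ge> 0)
    \<and> (\<forall>\<epsilon> N u v. 0 \<le> \<epsilon> \<longrightarrow> \<epsilon> < 1 / (4 * (real m + real n)) \<longrightarrow> eps_optimal m n G \<epsilon> N u v \<longrightarrow>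
          (\<forall>i<m. vnorm N (\<lambda>k. (\<Sum>j<n. G i j * v j k) - c i * u i k)
                   \<le> sqrt 10 * (real m + real n) powr (1/4) * \<epsilon> powr (1/4)))
    \<and> (\<forall>N u v. eps_optimal m n G 0 N u v \<longrightarrow>
          (\<forall>i<m. (\<forall>k<N. (\<Sum>j<n. G i j * v j k) = c i * u i k)
                 \<and> (\<Sum>j<n. G i j * ip N (u i) (v j)) = c i))
    \<and> ((\<forall>i<m. \<exists>j<n. G i j \<noteq> 0) \<longrightarrow> (\<forall>i<m. c i > 0))"
proof -
  note xg = assms
  have m0: "m \<noteq> 0"
  proof
    assume "m = 0" thus False using xg unfolding xor_game_def by simp
  qed
  hence M1: "1 \<le> real m + real n" by simp
  have P1: "\<forall>i<m. cc m n G i \<ge> 0" using cc_nonneg[OF xg] by blast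
  have P2: "\<forall>\<epsilon> N u v. 0 \<le> \<epsilon> \<longrightarrow> \<epsilon> < 1 / (4 * (real m + real n)) \<longrightarrow> eps_optimal m n G \<epsilon> N u v \<longrightarrow>
          (\<forall>i<m. vnorm N (\<lambda>k. (\<Sum>j<n. G i j * v j k) - cc m n G i * u i k)
                   \<le> sqrt 10 * (real m + real n) powr (1/4) * \<epsilon> powr (1/4))"
  proof (intro allI impI)
    fix \<epsilon> N u v i
    assume e0: "0 \<le> \<epsilon>" and e1: "\<epsilon> < 1 / (4 * (real m + real n))" and opt: "eps_optimal m n G \<epsilon> N u v" and i: "i < m"
    have S: "vec_strategy m n N u v" and b: "eps_q m n G - \<epsilon> \<le> bias m n N G u v"
      using opt unfolding eps_optimal_def by auto
    have "1 / (4 * (real m + real n)) \<le> 1" using M1 by (simp add: field_simps)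
    hence e1': "\<epsilon> \<le> 1" using e1 by linarith
    have "vnorm N (\<lambda>k. (\<Sum>j<n. G i j * v j k) - cc m n G i * u i k) \<le> sqrt (6 * \<epsilon>)"
      using robust(1)[OF xg S i e0 b] unfolding vnorm_def xw_def by (simp)
    also have "\<dots> \<le> sqrt 10 * (real m + real n) powr (1/4) * \<epsilon> powr (1/4)"
      by (rule final_num[OF e0 e1' M1])
    finally show "vnorm N (\<lambda>k. (\<Sum>j<n. G i j * v j k) - cc m n G i * u i k)
                   \<le> sqrt 10 * (real m + real n) powr (1/4) * \<epsilon> powr (1/4)" .
  qed
  have P3: "\<forall>N u v. eps_optimal m n G 0 N u v \<longrightarrow>
          (\<forall>i<m. (\<forall>k<N. (\<Sum>j<n. G i j * v j k) = cc m n G i * u i k)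
                 \<and> (\<Sum>j<n. G i j * ip N (u i) (v j)) = cc m n G i)"
  proof (intro allI impI conjI)
    fix N u v i
    assume opt: "eps_optimal m n G 0 N u v" and i: "i < m"
    have S: "vec_strategy m n N u v" and b: "eps_q m n G - 0 \<le> bias m n N G u v"
      using opt unfolding eps_optimal_def by auto
    note R = robust[OF xg S i order_refl b]
    have "ip N (u i) (xw n G i v) \<le> vnorm N (xw n G i v)" by (rule ipw_le[OF xg S i])
    hence "ip N (u i) (xw n G i v) = cc m n G i" using R(2) R(3) by simp
    thus "(\<Sum>j<n. G i j * ip N (u i) (v j)) = cc m n G i" by (simp add: row_ip)
    fix k assume k: "k < N"
    let ?d = "\<lambda>k. xw n G i v k - cc m n G i * u i k"
    have "(\<Sum>k<N. ?d k * ?d k) = 0"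
      using R(1) ip_nonneg[of N ?d] unfolding ip_def by simp
    hence "\<forall>k\<in>{..<N}. ?d k * ?d k = 0"
      by (subst sum_nonneg_eq_0_iff[symmetric]) auto
    hence "?d k = 0" using k by simp
    thus "(\<Sum>j<n. G i j * v j k) = cc m n G i * u i k" unfolding xw_def by simp
  qed
  have P4: "(\<forall>i<m. \<exists>j<n. G i j \<noteq> 0) \<longrightarrow> (\<forall>i<m. cc m n G i > 0)"
    using cc_pos[OF xg] by blast
  show ?thesis using P1 P2 P3 P4 by blast
qed

end
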